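(* Let $V$ be a finite set of propositional variables, let $u$ be a satisfiable full Decision-DNNF vertex over $V$, and let $Pr_u$ be the probability distribution on $2^V$ defined by $u$ (see context). Let $v$ be a decision vertex in $\vartheta_u$, and let $X$ be the set of variables labelled on the decision vertices of some directed path from $u$ to a parent of $v$. Then for each $b\in\{0,1\}$, $$Pr_u\big(sym(v)=b \,\big|\, X\big)=p_b(v),$$ where the conditioning on $X$ means conditioning on the variables of $X$ taking the values that correspond to the arcs followed by that path.
   Context: A full Decision-DNNF formula is a rooted directed acyclic graph in which each vertex $v$ carries a label $sym(v)$. A leaf is labelled $\bot$ (representing the constant $0$) or $\top$ (representing $1$). An internal vertex $v$ is either (i) a decision vertex, labelled with a propositional variable $x$, having exactly two children, the low child $ch_0(v)$ and the high child $ch_1(v)$; it represents $(\neg x\wedge\varphi_0)\vee(x\wedge\varphi_1)$ where $\varphi_b$ is the formula represented by $ch_b(v)$, and $x$ occurs in neither $\varphi_0$ nor $\varphi_1$; or (ii) a decomposition vertex, labelled $\wedge$, with a set of children $Ch(v)$ whose rooted sub-DAGs pairwise share no variables; it represents the conjunction of the formulas represented by its children. The arc from a decision vertex $v$ to $ch_b(v)$ is labelled with a number $p_b(v)\ge 0$ (an estimated marginal probability), where $p_0(v)+p_1(v)=1$ and $p_b(v)=0$ iff $sym(ch_b(v))=\bot$. For a vertex $w$, $\vartheta_w$ denotes the sub-DAG rooted at $w$. A vertex is satisfiable if the formula it represents is. For a full Decision-DNNF vertex $w$ over variable set $V$ and an assignment $\omega\in 2^V$, $Pr_w(\omega)$ is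 defined recursively: if $w=\bot$ then $Pr_w(\omega)=0$; if $w=\top$ then $Pr_w(\omega)=2^{-|V|}$; if $w$ is a decision vertex with $sym(w)=x$ and $\omega(x)=b$ then $Pr_w(\omega)=2\,p_b(w)\,Pr_{ch_b(w)}(\omega)$; if $w$ is a decomposition vertex with children $v_1,\dots,v_n$ then $Pr_w(\omega)=2^{(n-1)|V|}\prod_{i=1}^n Pr_{v_i}(\omega)$.
   Formalization: Every vertex of $\vartheta_u$ other than $\bot$ is assumed satisfiable, and when the parent of v is a decision vertex its variable is conditioned on the value of the arc from it to v. Each condition added here is assumed in the paper as well or is needed for the statement above to hold. *)

theory Defs
  imports Complex_Main
begin

text \<open>Decision-DNNF vertices, represented by the rooted sub-DAG they induce
  (unfolded as a tree; paths in the DAG correspond to positions in the tree).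
  A decision vertex  Dec x p0 p1 c0 c1  is labelled with variable x, has low child
  c0 (arc label p0) and high child c1 (arc label p1).\<close>

datatype 'x dd = Bot | Top
  | Dec 'x real real "'x dd" "'x dd"
  | Conj "'x dd list"

fun vars :: "'x dd \<Rightarrow> 'x set" where
  "vars Bot = {}"
| "vars Top = {}"
| "vars (Dec x p0 p1 c0 c1) = insert x (vars c0 \<union> vars c1)"
| "vars (Conj cs) = (\<Union>c\<in>set cs. vars c)"

text \<open>Semantics; an assignment in 2^V is the set of variables set to true.\<close>
fun eval :: "'x set \<Rightarrow> 'x dd \<Rightarrow> bool" where
  "eval \<omega> Bot = False"
| "eval \<omega> Top = True"
| "eval \<omega> (Dec x p0 p1 c0 c1) = (if x \<in> \<omega> then eval \<omega> c1 else eval \<omega> c0)"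
| "eval \<omega> (Conj cs) = (\<forall>c\<in>set cs. eval \<omega> c)"

definition satisfiable :: "'x dd \<Rightarrow> bool" where
  "satisfiable w \<longleftrightarrow> (\<exists>\<omega>. eval \<omega> w)"

fun wf :: "'x dd \<Rightarrow> bool" where
  "wf Bot = True"
| "wf Top = True"
| "wf (Dec x p0 p1 c0 c1) =
     (x \<notin> vars c0 \<and> x \<notin> vars c1 \<and> p0 \<ge> 0 \<and> p1 \<ge> 0 \<and> p0 + p1 = 1
      \<and> (p0 = 0 \<longleftrightarrow> c0 = Bot) \<and> (p1 = 0 \<longleftrightarrow> c1 = Bot) \<and> wf c0 \<and> wf c1)"
| "wf (Conj cs) =
     (distinct cs
      \<and> (\<forall>i<length cs. \<forall>j<length cs. i \<noteq> j \<longrightarrow> vars (cs ! i) \<inter> vars (cs ! j) = {})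
      \<and> (\<forall>c\<in>set cs. wf c))"

fun Pr :: "'x set \<Rightarrow> 'x dd \<Rightarrow> 'x set \<Rightarrow> real" where
  "Pr V Bot \<omega> = 0"
| "Pr V Top \<omega> = 2 powr (- real (card V))"
| "Pr V (Dec x p0 p1 c0 c1) \<omega> =
     (if x \<in> \<omega> then 2 * p1 * Pr V c1 \<omega> else 2 * p0 * Pr V c0 \<omega>)"
| "Pr V (Conj cs) \<omega> =
     2 powr ((real (length cs) - 1) * real (card V)) * prod_list (map (\<lambda>c. Pr V c \<omega>) cs)"

definition prob :: "'x set \<Rightarrow> 'x dd \<Rightarrow> 'x set set \<Rightarrow> real" where
  "prob V u E = (\<Sum>\<omega>\<in>Pow V \<inter> E. Pr V u \<omega>)"

definition cond_prob :: "'x set \<Rightarrow> 'x dd \<Rightarrow> 'x set set \<Rightarrow> 'x set set \<Rightarrow> real" where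
  "cond_prob V u A B = prob V u (A \<inter> B) / prob V u B"

datatype step = Br bool | Ch nat

fun follow :: "'x dd \<Rightarrow> step list \<Rightarrow> 'x dd option" where
  "follow w [] = Some w"
| "follow (Dec x p0 p1 c0 c1) (Br b # ps) = follow (if b then c1 else c0) ps"
| "follow (Conj cs) (Ch i # ps) = (if i < length cs then follow (cs ! i) ps else None)"
| "follow _ _ = None"

fun decs :: "'x dd \<Rightarrow> step list \<Rightarrow> ('x \<times> bool) list" where
  "decs w [] = []"
| "decs (Dec x p0 p1 c0 c1) (Br b # ps) = (x, b) # decs (if b then c1 else c0) ps"
| "decs (Conj cs) (Ch i # ps) = (if i < length cs then decs (cs ! i) ps else [])"
| "decs _ _ = []"

end

theory Submission
  imports Defs
begin

definition SV :: "'x set \<Rightarrow> ('x set \<Rightarrow> real) \<Rightarrow> real" where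
  "SV V h = (\<Sum>\<omega>\<in>Pow V. h \<omega>)"

definition loc :: "'x set \<Rightarrow> ('x set \<Rightarrow> 'b) \<Rightarrow> bool" where
  "loc A f \<longleftrightarrow> (\<forall>\<omega> \<omega>'. \<omega> \<inter> A = \<omega>' \<inter> A \<longrightarrow> f \<omega> = f \<omega>')"

lemma loc_mono: "loc A f \<Longrightarrow> A \<subseteq> B \<Longrightarrow> loc B f"
  unfolding loc_def by blast

lemma split_pow:
  assumes "finite V" "A \<subseteq> V"
  shows "SV V h = (\<Sum>a\<in>Pow A. \<Sum>b\<in>Pow (V - A). h (a \<union> b))"
proof -
  have bij: "bij_betw (\<lambda>(a,b). a \<union> b) (Pow A \<times> Pow (V - A)) (Pow V)"
  proof (rule bij_betw_byWitness[where f'="\<lambda>\<omega>. (\<omega> \<inter> A, \<omega> - A)"])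
    show "\<forall>x\<in>Pow A \<times> Pow (V - A). ((case x of (a, b) \<Rightarrow> a \<union> b) \<inter> A, (case x of (a, b) \<Rightarrow> a \<union> b) - A) = x"
    proof
      fix x assume "x \<in> Pow A \<times> Pow (V - A)"
      then obtain a b where x: "x = (a, b)" "a \<subseteq> A" "b \<subseteq> V - A" by auto
      have "(a \<union> b) \<inter> A = a" "(a \<union> b) - A = b" using x by auto
      then show "((case x of (a, b) \<Rightarrow> a \<union> b) \<inter> A, (case x of (a, b) \<Rightarrow> a \<union> b) - A) = x"
        using x by simp
    qed
    show "\<forall>y\<in>Pow V. (case (y \<inter> A, y - A) of (a, b) \<Rightarrow> a \<union> b) = y" by auto
    show "(\<lambda>(a, b). a \<union> b) ` (Pow A \<times> Pow (V - A)) \<subseteq> Pow V" using assms by auto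
    show "(\<lambda>\<omega>. (\<omega> \<inter> A, \<omega> - A)) ` Pow V \<subseteq> Pow A \<times> Pow (V - A)" by auto
  qed
  have "(\<Sum>a\<in>Pow A. \<Sum>b\<in>Pow (V - A). h (a \<union> b)) = (\<Sum>x\<in>Pow A \<times> Pow (V - A). h ((\<lambda>(a,b). a \<union> b) x))"
    by (simp add: sum.cartesian_product case_prod_unfold)
  also have "\<dots> = SV V h" unfolding SV_def by (rule sum.reindex_bij_betw[OF bij])
  finally show ?thesis by simp
qed

lemma factor:
  assumes "finite V" "A \<subseteq> V" "loc A f" "loc (V - A) g"
  shows "2 ^ card V * SV V (\<lambda>\<omega>. f \<omega> * g \<omega>) = SV V f * SV V g"
proof -
  have fa: "f (a \<union> b) = f a" if "a \<subseteq> A" "b \<subseteq> V - A" for a b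
  proof -
    have "(a \<union> b) \<inter> A = a \<inter> A" using that by blast
    then show ?thesis using assms(3) unfolding loc_def by blast
  qed
  have gb: "g (a \<union> b) = g b" if "a \<subseteq> A" "b \<subseteq> V - A" for a b
  proof -
    have "(a \<union> b) \<inter> (V - A) = b \<inter> (V - A)" using that by blast
    then show ?thesis using assms(4) unfolding loc_def by blast
  qed
  have fin: "finite A" "finite (V - A)" using assms finite_subset by auto
  have cV: "card V = card A + card (V - A)"
    using card_Diff_subset[OF fin(1) assms(2)] card_mono[OF assms(1,2)] by simp
  have 1: "SV V (\<lambda>\<omega>. f \<omega> * g \<omega>) = (\<Sum>a\<in>Pow A. f a) * (\<Sum>b\<in>Pow (V - A). g b)"
    unfolding split_pow[OF assms(1,2)] sum_product
    by (intro sum.cong refl) (auto simp: fa gb)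
  have 2: "SV V f = 2 ^ card (V - A) * (\<Sum>a\<in>Pow A. f a)"
    unfolding split_pow[OF assms(1,2)] sum_distrib_left
    by (intro sum.cong refl) (auto simp: fa card_Pow fin)
  have 3: "SV V g = 2 ^ card A * (\<Sum>b\<in>Pow (V - A). g b)"
    unfolding split_pow[OF assms(1,2)]
    by (simp add: gb card_Pow fin sum_distrib_left)
  show ?thesis unfolding 1 2 3 cV power_add by simp
qed

lemma flip:
  assumes "finite V" "y \<in> V" "loc (V - {y}) H"
  shows "SV V (\<lambda>\<omega>. if (y \<in> \<omega>) = c then H \<omega> else 0) = SV V H / 2"
proof -
  have sub: "{y} \<subseteq> V" using assms by auto
  have Hi: "H (insert y b) = H b" if "b \<subseteq> V - {y}" for b
  proof -
    have "(insert y b) \<inter> (V - {y}) = b \<inter> (V - {y})" using that by blast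
    then show ?thesis using assms(3) unfolding loc_def by blast
  qed
  have P: "Pow {y} = {{}, {y}}" by blast
  have two: "sum F {{}, {y}} = F {} + F {y}" for F :: "'a set \<Rightarrow> real" by simp
  define S where "S = (\<Sum>b\<in>Pow (V - {y}). H b)"
  have e1: "(\<Sum>b\<in>Pow (V - {y}). H ({y} \<union> b)) = S" unfolding S_def
    by (rule sum.cong) (auto simp: Hi)
  have e2: "(\<Sum>b\<in>Pow (V - {y}). H ({} \<union> b)) = S" unfolding S_def by simp
  have z0: "(\<Sum>b\<in>Pow (V - {y}). (if (y \<in> {} \<union> b) = c then H ({} \<union> b) else 0))
      = (\<Sum>b\<in>Pow (V - {y}). (if c then 0 else H b))" by (rule sum.cong) auto
  have z: "(\<Sum>b\<in>Pow (V - {y}). (if (y \<in> {} \<union> b) = c then H ({} \<union> b) else 0))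
      = (if c then 0 else S)" unfolding z0 S_def by simp
  have o0: "(\<Sum>b\<in>Pow (V - {y}). (if (y \<in> {y} \<union> b) = c then H ({y} \<union> b) else 0))
      = (\<Sum>b\<in>Pow (V - {y}). (if c then H ({y} \<union> b) else 0))" by (rule sum.cong) auto
  have o: "(\<Sum>b\<in>Pow (V - {y}). (if (y \<in> {y} \<union> b) = c then H ({y} \<union> b) else 0))
      = (if c then S else 0)" unfolding o0 using e1 by simp
  have "SV V (\<lambda>\<omega>. if (y \<in> \<omega>) = c then H \<omega> else 0) = S"
    unfolding split_pow[OF assms(1) sub] P two z o by simp
  moreover have "SV V H = 2 * S"
    unfolding split_pow[OF assms(1) sub] P two e1 e2 by simp
  ultimately show ?thesis by simp
qed

lemma Pr_loc: "loc (vars w) (Pr V w)"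
proof (induction w)
  case (Dec x p0 p1 c0 c1)
  show ?case unfolding loc_def
  proof (intro allI impI)
    fix \<omega> \<omega>' :: "'a set" assume eq: "\<omega> \<inter> vars (Dec x p0 p1 c0 c1) = \<omega>' \<inter> vars (Dec x p0 p1 c0 c1)"
    have "\<omega> \<inter> vars c0 = \<omega>' \<inter> vars c0" "\<omega> \<inter> vars c1 = \<omega>' \<inter> vars c1" "(x \<in> \<omega>) = (x \<in> \<omega>')"
      using eq by auto
    then have "Pr V c0 \<omega> = Pr V c0 \<omega>'" "Pr V c1 \<omega> = Pr V c1 \<omega>'" "(x \<in> \<omega>) = (x \<in> \<omega>')"
      using Dec.IH unfolding loc_def by blast+
    then show "Pr V (Dec x p0 p1 c0 c1) \<omega> = Pr V (Dec x p0 p1 c0 c1) \<omega>'" by simp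
  qed
next
  case (Conj cs)
  show ?case unfolding loc_def
  proof (intro allI impI)
    fix \<omega> \<omega>' :: "'a set" assume eq: "\<omega> \<inter> vars (Conj cs) = \<omega>' \<inter> vars (Conj cs)"
    have "\<forall>c\<in>set cs. Pr V c \<omega> = Pr V c \<omega>'"
    proof
      fix c assume c: "c \<in> set cs"
      then have "\<omega> \<inter> vars c = \<omega>' \<inter> vars c" using eq by auto
      then show "Pr V c \<omega> = Pr V c \<omega>'" using Conj c unfolding loc_def by blast
    qed
    then have "prod_list (map (\<lambda>c. Pr V c \<omega>) cs) = prod_list (map (\<lambda>c. Pr V c \<omega>') cs)"
      by (intro arg_cong[where f=prod_list] map_cong) auto
    then show "Pr V (Conj cs) \<omega> = Pr V (Conj cs) \<omega>'" by simp
  qed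
qed (auto simp: loc_def)

lemma Pr_nonneg: "wf w \<Longrightarrow> Pr V w \<omega> \<ge> 0"
  by (induction w) (auto intro!: mult_nonneg_nonneg prod_list_nonneg)

lemma prod_list_pos: "(\<And>c. c \<in> set cs \<Longrightarrow> (f c :: real) > 0) \<Longrightarrow> prod_list (map f cs) > 0"
  by (induction cs) auto

lemma Pr_pos: "wf w \<Longrightarrow> eval \<omega> w \<Longrightarrow> Pr V w \<omega> > 0"
proof (induction w)
  case (Dec x p0 p1 c0 c1)
  show ?case
  proof (cases "x \<in> \<omega>")
    case True
    then have "eval \<omega> c1" "c1 \<noteq> Bot" using Dec.prems by auto
    then have "p1 > 0" "Pr V c1 \<omega> > 0" using Dec by auto
    then show ?thesis using True by simp
  next
    case False
    then have "eval \<omega> c0" "c0 \<noteq> Bot" using Dec.prems by auto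
    then have "p0 > 0" "Pr V c0 \<omega> > 0" using Dec by auto
    then show ?thesis using False by simp
  qed
next
  case (Conj cs)
  then show ?case by (auto intro!: mult_pos_pos prod_list_pos)
qed auto

lemma decs_vars: "(y, c) \<in> set (decs w ps) \<Longrightarrow> y \<in> vars w"
  by (induction w ps rule: decs.induct) (auto split: if_splits)

lemma follow_vars: "follow w ps = Some t \<Longrightarrow> vars t \<subseteq> vars w"
  by (induction w ps rule: follow.induct) (fastforce split: if_splits)+

lemma follow_append: "follow w ps = Some t \<Longrightarrow> follow w (ps @ qs) = follow t qs"
  by (induction w ps rule: follow.induct) (auto split: if_splits)

lemma follow_Bot: "follow Bot ps = Some t \<Longrightarrow> t = Bot"
  by (cases ps) auto

lemma powr_top: "(2::real) powr (- real k) = 1 / 2 ^ k"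
  by (simp add: powr_minus powr_realpow divide_inverse)

lemma powr_conj: "(2::real) powr ((real n - 1) * real k) = 2 ^ (n * k) / 2 ^ k"
proof -
  have "(real n - 1) * real k = real (n * k) - real k" by (simp add: algebra_simps)
  moreover have "(2::real) powr (real (n*k)) = 2^(n*k)" by (rule powr_realpow) simp
  moreover have "(2::real) powr (real k) = 2^k" by (rule powr_realpow) simp
  ultimately show ?thesis by (simp only: powr_diff)
qed

definition hsat :: "'x dd \<Rightarrow> bool" where
  "hsat w \<longleftrightarrow> (\<forall>qs w'. follow w qs = Some w' \<and> w' \<noteq> Bot \<longrightarrow> satisfiable w')"

lemma hsat_Dec: "hsat (Dec x p0 p1 c0 c1) \<Longrightarrow> hsat c0 \<and> hsat c1"
  unfolding hsat_def by (metis follow.simps(2))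

lemma hsat_Conj: "hsat (Conj cs) \<Longrightarrow> c \<in> set cs \<Longrightarrow> hsat c"
  unfolding hsat_def by (metis follow.simps(3) in_set_conv_nth)

lemma hsat_sat: "hsat w \<Longrightarrow> w \<noteq> Bot \<Longrightarrow> satisfiable w"
  unfolding hsat_def by (metis follow.simps(1))

lemma loc_prod: "(\<And>c. c \<in> F \<Longrightarrow> loc A (f c)) \<Longrightarrow> loc A (\<lambda>\<omega>. \<Prod>c\<in>F. (f c \<omega> :: real))"
  unfolding loc_def by (metis (mono_tags, lifting) prod.cong)

lemma wf_Conj_disj: "wf (Conj cs) \<Longrightarrow> c \<in> set cs \<Longrightarrow> c' \<in> set cs \<Longrightarrow> c \<noteq> c' \<Longrightarrow> vars c \<inter> vars c' = {}"
  by (auto simp: in_set_conv_nth)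

lemma Pr_Conj_set: "wf (Conj cs) \<Longrightarrow> Pr V (Conj cs) \<omega> =
   2 powr ((real (length cs) - 1) * real (card V)) * (\<Prod>c\<in>set cs. Pr V c \<omega>)"
  by (simp add: prod.distinct_set_conv_list)

lemma prod_mass:
  assumes "finite V" "finite S" "\<forall>c\<in>S. SV V (Pr V c) = 1 \<and> vars c \<subseteq> V"
    "\<forall>c\<in>S. \<forall>c'\<in>S. c \<noteq> c' \<longrightarrow> vars c \<inter> vars c' = {}"
  shows "SV V (\<lambda>\<omega>. \<Prod>c\<in>S. Pr V c \<omega>) * 2 ^ (card S * card V) = 2 ^ card V"
  using assms(2-4)
proof (induction S rule: finite_induct)
  case empty
  then show ?case using assms(1) by (simp add: SV_def card_Pow)
next
  case (insert c F)
  have l1: "loc (vars c) (Pr V c)" by (rule Pr_loc)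
  have l2: "loc (V - vars c) (\<lambda>\<omega>. \<Prod>c\<in>F. Pr V c \<omega>)"
  proof (rule loc_prod)
    fix c' assume "c' \<in> F"
    then have "vars c' \<subseteq> V - vars c" using insert by auto
    then show "loc (V - vars c) (Pr V c')" using Pr_loc loc_mono by blast
  qed
  have f: "2 ^ card V * SV V (\<lambda>\<omega>. Pr V c \<omega> * (\<Prod>c\<in>F. Pr V c \<omega>)) = SV V (Pr V c) * SV V (\<lambda>\<omega>. \<Prod>c\<in>F. Pr V c \<omega>)"
    by (rule factor[OF assms(1) _ l1 l2]) (use insert in auto)
  have IH: "SV V (\<lambda>\<omega>. \<Prod>c\<in>F. Pr V c \<omega>) * 2 ^ (card F * card V) = 2 ^ card V"
    using insert by auto
  have "SV V (\<lambda>\<omega>. \<Prod>c\<in>insert c F. Pr V c \<omega>) * 2 ^ (card (insert c F) * card V)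
     = (2 ^ card V * SV V (\<lambda>\<omega>. Pr V c \<omega> * (\<Prod>c\<in>F. Pr V c \<omega>))) * 2 ^ (card F * card V)"
    using insert by (simp add: power_add mult_ac)
  also have "\<dots> = 2 ^ card V" using f IH insert by simp
  finally show ?case .
qed

lemma mass:
  assumes "finite V"
  shows "wf w \<Longrightarrow> vars w \<subseteq> V \<Longrightarrow> hsat w \<Longrightarrow> w \<noteq> Bot \<Longrightarrow> SV V (Pr V w) = 1"
proof (induction w)
  case Top
  then show ?case using assms by (simp add: SV_def card_Pow powr_top)
next
  case (Dec x p0 p1 c0 c1)
  have xV: "x \<in> V" using Dec by auto
  have ch: "c \<noteq> Bot \<Longrightarrow> SV V (Pr V c) = 1" if "c = c0 \<or> c = c1" for c
    using that Dec.IH Dec.prems hsat_Dec[OF Dec.prems(3)] by auto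
  have ch2: "q * SV V (Pr V c) = q" if "c = c0 \<and> q = p0 \<or> c = c1 \<and> q = p1" for c q
  proof (cases "c = Bot")
    case True
    then have "q = 0" using that Dec.prems(1) by auto
    then show ?thesis by simp
  next
    case False
    then show ?thesis using ch that by auto
  qed
  have vc: "vars c \<subseteq> V - {x}" if "c = c0 \<or> c = c1" for c
    using that Dec.prems(1,2) by auto
  have lc: "loc (V - {x}) (\<lambda>\<omega>. q * Pr V c \<omega>)" if "c = c0 \<or> c = c1" for c q
    using loc_mono[OF Pr_loc vc[OF that]] unfolding loc_def by metis
  have "SV V (Pr V (Dec x p0 p1 c0 c1)) = SV V (\<lambda>\<omega>. if (x \<in> \<omega>) = True then 2 * p1 * Pr V c1 \<omega> else 0)
      + SV V (\<lambda>\<omega>. if (x \<in> \<omega>) = False then 2 * p0 * Pr V c0 \<omega> else 0)"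
    unfolding SV_def sum.distrib[symmetric] by (intro sum.cong) auto
  also have "\<dots> = SV V (\<lambda>\<omega>. 2 * p1 * Pr V c1 \<omega>) / 2 + SV V (\<lambda>\<omega>. 2 * p0 * Pr V c0 \<omega>) / 2"
    using flip[OF assms xV lc[of c1 "2 * p1"], of True] flip[OF assms xV lc[of c0 "2 * p0"], of False]
    by simp
  also have "\<dots> = p1 * SV V (Pr V c1) + p0 * SV V (Pr V c0)"
    by (simp add: SV_def sum_distrib_left[symmetric])
  also have "\<dots> = 1"
  proof -
    have a: "p1 * SV V (Pr V c1) = p1" by (rule ch2) simp
    have b: "p0 * SV V (Pr V c0) = p0" by (rule ch2) simp
    have "p0 + p1 = 1" using Dec.prems(1) by simp
    then show ?thesis unfolding a b by simp
  qed
  finally show ?case .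
next
  case (Conj cs)
  obtain \<omega> where "eval \<omega> (Conj cs)" using hsat_sat Conj.prems unfolding satisfiable_def by blast
  then have nb: "c \<in> set cs \<Longrightarrow> c \<noteq> Bot" for c by auto
  have S1: "\<forall>c\<in>set cs. SV V (Pr V c) = 1 \<and> vars c \<subseteq> V"
  proof
    fix c assume c: "c \<in> set cs"
    have "wf c" "vars c \<subseteq> V" "hsat c" "c \<noteq> Bot"
      using Conj.prems(1,2) c hsat_Conj[OF Conj.prems(3) c] nb[OF c] by auto
    then show "SV V (Pr V c) = 1 \<and> vars c \<subseteq> V" using Conj.IH[OF c] by simp
  qed
  have pm: "SV V (\<lambda>\<omega>. \<Prod>c\<in>set cs. Pr V c \<omega>) * 2 ^ (card (set cs) * card V) = 2 ^ card V"
    by (rule prod_mass[OF assms finite_set S1]) (use wf_Conj_disj Conj.prems in blast)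
  have cl: "card (set cs) = length cs" using Conj.prems by (simp add: distinct_card)
  have "SV V (Pr V (Conj cs)) = 2 powr ((real (length cs) - 1) * real (card V)) * SV V (\<lambda>\<omega>. \<Prod>c\<in>set cs. Pr V c \<omega>)"
    unfolding SV_def using Pr_Conj_set[OF Conj.prems(1)] by (simp add: sum_distrib_left)
  also have "\<dots> = 1" using pm unfolding powr_conj cl by (simp add: field_simps)
  finally show ?case .
qed simp

lemma loc_ev: "loc A P \<Longrightarrow> loc A Q \<Longrightarrow> loc A f \<Longrightarrow> loc A (\<lambda>\<omega>. if P \<omega> \<and> Q \<omega> then f \<omega> else (0::real))"
  unfolding loc_def by metis

lemma loc_decs: "loc (vars w) (\<lambda>\<omega>. \<forall>(y, c)\<in>set (decs w ps). (y \<in> \<omega>) = c)"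
  unfolding loc_def using decs_vars by fast

lemma path:
  assumes "finite V"
  shows "wf w \<Longrightarrow> vars w \<subseteq> V \<Longrightarrow> hsat w \<Longrightarrow> follow w ps = Some t \<Longrightarrow> t \<noteq> Bot \<Longrightarrow>
    \<exists>K>0. \<forall>B. loc (vars t) B \<longrightarrow>
      SV V (\<lambda>\<omega>. if (\<forall>(y, c)\<in>set (decs w ps). (y \<in> \<omega>) = c) \<and> B \<omega> then Pr V w \<omega> else 0)
      = K * SV V (\<lambda>\<omega>. if B \<omega> then Pr V t \<omega> else 0)"
proof (induction ps arbitrary: w)
  case Nil
  then show ?case by (intro exI[of _ 1]) auto
next
  case (Cons s ps')
  show ?case
  proof (cases w)
    case (Dec y q0 q1 d0 d1)
    then obtain c where s: "s = Br c" using Cons.prems(4) by (cases s) auto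
    define ch where "ch = (if c then d1 else d0)"
    define qc where "qc = (if c then q1 else q0)"
    have fch: "follow ch ps' = Some t" using Cons.prems(4) Dec s ch_def by simp
    have wch: "wf ch" "vars ch \<subseteq> V" "hsat ch" "y \<notin> vars ch" "y \<in> V"
      using Cons.prems Dec ch_def hsat_Dec[OF Cons.prems(3)[unfolded Dec]] by auto
    obtain K' where K': "K' > 0" "\<forall>B. loc (vars t) B \<longrightarrow>
      SV V (\<lambda>\<omega>. if (\<forall>(y, c)\<in>set (decs ch ps'). (y \<in> \<omega>) = c) \<and> B \<omega> then Pr V ch \<omega> else 0)
      = K' * SV V (\<lambda>\<omega>. if B \<omega> then Pr V t \<omega> else 0)"
      using Cons.IH[OF wch(1-3) fch Cons.prems(5)] by blast
    have "ch \<noteq> Bot" using fch follow_Bot Cons.prems(5) by blast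
    then have qc: "qc > 0" using Cons.prems(1) Dec ch_def qc_def by (auto simp: less_eq_real_def)
    have tv: "vars t \<subseteq> vars ch" using follow_vars[OF fch] .
    show ?thesis
    proof (intro exI[of _ "qc * K'"] conjI allI impI)
      show "qc * K' > 0" using qc K' by simp
      fix B :: "'a set \<Rightarrow> bool" assume lB: "loc (vars t) B"
      define E where "E = (\<lambda>\<omega>. \<forall>(y, c)\<in>set (decs ch ps'). (y \<in> \<omega>) = c)"
      define H where "H = (\<lambda>\<omega>. if E \<omega> \<and> B \<omega> then Pr V ch \<omega> else 0)"
      have lE: "loc (vars ch) E" unfolding E_def by (rule loc_decs)
      have lH0: "loc (vars ch) H" unfolding H_def by (rule loc_ev[OF lE loc_mono[OF lB tv] Pr_loc])
      have lH: "loc (V - {y}) H" by (rule loc_mono[OF lH0]) (use wch in blast)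
      have lH2: "loc (V - {y}) (\<lambda>\<omega>. 2 * qc * H \<omega>)" unfolding loc_def
      proof (intro allI impI)
        fix a b :: "'a set" assume "a \<inter> (V - {y}) = b \<inter> (V - {y})"
        then have "H a = H b" using lH unfolding loc_def by blast
        then show "2 * qc * H a = 2 * qc * H b" by simp
      qed
      have "SV V (\<lambda>\<omega>. if (\<forall>(y, c)\<in>set (decs w (s # ps')). (y \<in> \<omega>) = c) \<and> B \<omega> then Pr V w \<omega> else 0)
          = SV V (\<lambda>\<omega>. if (y \<in> \<omega>) = c then 2 * qc * H \<omega> else 0)"
        unfolding SV_def
      proof (intro sum.cong refl)
        fix \<omega> :: "'a set"
        show "(if (\<forall>(y, c)\<in>set (decs w (s # ps')). (y \<in> \<omega>) = c) \<and> B \<omega> then Pr V w \<omega> else 0)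
          = (if (y \<in> \<omega>) = c then 2 * qc * H \<omega> else 0)"
          unfolding Dec s H_def E_def ch_def qc_def
          by (cases c; cases "y \<in> \<omega>") simp_all
      qed
      also have "\<dots> = SV V (\<lambda>\<omega>. 2 * qc * H \<omega>) / 2"
        by (rule flip[OF assms wch(5) lH2])
      also have "\<dots> = qc * SV V H" by (simp add: SV_def sum_distrib_left[symmetric])
      also have "\<dots> = qc * K' * SV V (\<lambda>\<omega>. if B \<omega> then Pr V t \<omega> else 0)"
        using K'(2)[rule_format, OF lB] unfolding H_def E_def by simp
      finally show "SV V (\<lambda>\<omega>. if (\<forall>(y, c)\<in>set (decs w (s # ps')). (y \<in> \<omega>) = c) \<and> B \<omega> then Pr V w \<omega> else 0)
          = qc * K' * SV V (\<lambda>\<omega>. if B \<omega> then Pr V t \<omega> else 0)" .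
    qed
  next
    case (Conj cs)
    obtain i where s: "s = Ch i" using Cons.prems(4) unfolding Conj by (cases s) auto
    have il: "i < length cs" using Cons.prems(4) unfolding Conj s by (auto split: if_splits)
    define ch where "ch = cs ! i"
    have chin: "ch \<in> set cs" using il ch_def by simp
    have fch: "follow ch ps' = Some t" using Cons.prems(4) il unfolding Conj s ch_def by simp
    have wfc: "wf (Conj cs)" using Cons.prems(1) unfolding Conj .
    have vc: "vars (Conj cs) \<subseteq> V" using Cons.prems(2) unfolding Conj .
    have hc: "hsat (Conj cs)" using Cons.prems(3) unfolding Conj .
    have wch: "wf ch" "vars ch \<subseteq> V" "hsat ch"
      using wfc vc chin hsat_Conj[OF hc chin] by auto
    obtain K' where K': "K' > 0" "\<forall>B. loc (vars t) B \<longrightarrow>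
      SV V (\<lambda>\<omega>. if (\<forall>(y, c)\<in>set (decs ch ps'). (y \<in> \<omega>) = c) \<and> B \<omega> then Pr V ch \<omega> else 0)
      = K' * SV V (\<lambda>\<omega>. if B \<omega> then Pr V t \<omega> else 0)"
      using Cons.IH[OF wch(1-3) fch Cons.prems(5)] by blast
    have tv: "vars t \<subseteq> vars ch" using follow_vars[OF fch] .
    define R where "R = (\<lambda>\<omega>. \<Prod>c\<in>set cs - {ch}. Pr V c \<omega>)"
    define C where "C = (2::real) powr ((real (length cs) - 1) * real (card V))"
    have PrW: "Pr V w \<omega> = C * (Pr V ch \<omega> * R \<omega>)" for \<omega>
    proof -
      have "(\<Prod>c\<in>set cs. Pr V c \<omega>) = Pr V ch \<omega> * R \<omega>"
        unfolding R_def by (rule prod.remove[OF finite_set chin])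
      then show ?thesis unfolding Conj Pr_Conj_set[OF wfc] C_def by simp
    qed
    have lR: "loc (V - vars ch) R" unfolding R_def
    proof (rule loc_prod)
      fix c' assume c': "c' \<in> set cs - {ch}"
      then have "vars c' \<inter> vars ch = {}" using wf_Conj_disj[OF wfc, of c' ch] chin by blast
      moreover have "vars c' \<subseteq> V" using c' vc by auto
      ultimately have "vars c' \<subseteq> V - vars ch" by blast
      then show "loc (V - vars ch) (Pr V c')" using Pr_loc loc_mono by blast
    qed
    have wfcs: "c \<in> set cs \<Longrightarrow> wf c" for c using wfc by simp
    have Rnn: "R \<omega> \<ge> 0" for \<omega> unfolding R_def
      by (rule prod_nonneg) (use Pr_nonneg wfcs in blast)
    have "w \<noteq> Bot" unfolding Conj by simp
    then obtain \<omega> where ev: "eval \<omega> (Conj cs)" using hsat_sat[OF hc] unfolding satisfiable_def Conj by blast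
    have evc: "c \<in> set cs \<Longrightarrow> eval \<omega> c" for c using ev by simp
    have Rp: "R \<omega> > 0" unfolding R_def
      by (rule prod_pos) (use Pr_pos wfcs evc in blast)
    have "R (\<omega> \<inter> V) = R \<omega>"
    proof -
      have "(\<omega> \<inter> V) \<inter> (V - vars ch) = \<omega> \<inter> (V - vars ch)" by blast
      then show ?thesis using lR unfolding loc_def by blast
    qed
    then have Rp2: "R (\<omega> \<inter> V) > 0" using Rp by simp
    have "R (\<omega> \<inter> V) \<le> SV V R" unfolding SV_def
      by (rule member_le_sum) (use Rnn assms in auto)
    then have "SV V R > 0" using Rp2 by linarith
    then have Kp: "C * SV V R / 2 ^ card V > 0" unfolding C_def by simp
    show ?thesis
    proof (intro exI[of _ "C * SV V R / 2 ^ card V * K'"] conjI allI impI)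
      show "C * SV V R / 2 ^ card V * K' > 0" using mult_pos_pos[OF Kp K'(1)] .
      fix B :: "'a set \<Rightarrow> bool" assume lB: "loc (vars t) B"
      define E where "E = (\<lambda>\<omega>. \<forall>(y, c)\<in>set (decs ch ps'). (y \<in> \<omega>) = c)"
      define H where "H = (\<lambda>\<omega>. if E \<omega> \<and> B \<omega> then Pr V ch \<omega> else 0)"
      have lE: "loc (vars ch) E" unfolding E_def by (rule loc_decs)
      have lH: "loc (vars ch) H" unfolding H_def by (rule loc_ev[OF lE loc_mono[OF lB tv] Pr_loc])
      have fac: "2 ^ card V * SV V (\<lambda>\<omega>. H \<omega> * R \<omega>) = SV V H * SV V R"
        by (rule factor[OF assms wch(2) lH lR])
      have "SV V (\<lambda>\<omega>. if (\<forall>(y, c)\<in>set (decs w (s # ps')). (y \<in> \<omega>) = c) \<and> B \<omega> then Pr V w \<omega> else 0)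
          = SV V (\<lambda>\<omega>. C * (H \<omega> * R \<omega>))"
        unfolding SV_def
      proof (rule sum.cong[OF refl])
        fix \<omega> :: "'a set"
        have "decs w (s # ps') = decs ch ps'" using il unfolding Conj s ch_def by simp
        then show "(if (\<forall>(y, c)\<in>set (decs w (s # ps')). (y \<in> \<omega>) = c) \<and> B \<omega> then Pr V w \<omega> else 0)
          = C * (H \<omega> * R \<omega>)" unfolding PrW H_def E_def by simp
      qed
      also have "\<dots> = C * SV V (\<lambda>\<omega>. H \<omega> * R \<omega>)" by (simp add: SV_def sum_distrib_left)
      also have "\<dots> = C * SV V R / 2 ^ card V * SV V H" using fac by (simp add: field_simps)
      also have "\<dots> = C * SV V R / 2 ^ card V * K' * SV V (\<lambda>\<omega>. if B \<omega> then Pr V t \<omega> else 0)"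
        using K'(2)[rule_format, OF lB] unfolding H_def E_def by simp
      finally show "SV V (\<lambda>\<omega>. if (\<forall>(y, c)\<in>set (decs w (s # ps')). (y \<in> \<omega>) = c) \<and> B \<omega> then Pr V w \<omega> else 0)
          = C * SV V R / 2 ^ card V * K' * SV V (\<lambda>\<omega>. if B \<omega> then Pr V t \<omega> else 0)" .
    qed
  qed (use Cons.prems(4) in \<open>cases s; auto\<close>)+
qed

lemma follow_wf: "wf w \<Longrightarrow> follow w ps = Some t \<Longrightarrow> wf t"
  by (induction w ps rule: follow.induct) (auto split: if_splits)

lemma follow_hsat: "hsat w \<Longrightarrow> follow w ps = Some t \<Longrightarrow> hsat t"
  unfolding hsat_def using follow_append by metis

lemma prob_SV: "finite V \<Longrightarrow> prob V u {\<omega>. P \<omega>} = SV V (\<lambda>\<omega>. if P \<omega> then Pr V u \<omega> else 0)"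
  unfolding prob_def SV_def by (simp add: sum.inter_restrict)

theorem proposition1:
  fixes V :: "'x set" and u :: "'x dd" and ps :: "step list"
    and x :: 'x and p0 p1 :: real and c0 c1 :: "'x dd" and b :: bool
  assumes "finite V"
    and "vars u \<subseteq> V"
    and "wf u"
    and "satisfiable u"
    and "\<forall>qs w. follow u qs = Some w \<and> w \<noteq> Bot \<longrightarrow> satisfiable w"
    and "follow u ps = Some (Dec x p0 p1 c0 c1)"
    and "ps \<noteq> []"
  shows "cond_prob V u {\<omega>. (x \<in> \<omega>) = b}
           {\<omega>. \<forall>(y, c) \<in> set (decs u ps). (y \<in> \<omega>) = c}
         = (if b then p1 else p0)"
proof -
  define t where "t = Dec x p0 p1 c0 c1"
  define E where "E = (\<lambda>\<omega>. \<forall>(y, c) \<in> set (decs u ps). (y \<in> \<omega>) = c)"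
  have hs: "hsat u" using assms(5) unfolding hsat_def by blast
  have ft: "follow u ps = Some t" using assms(6) unfolding t_def .
  obtain K where K: "K > 0" "\<forall>B. loc (vars t) B \<longrightarrow>
      SV V (\<lambda>\<omega>. if E \<omega> \<and> B \<omega> then Pr V u \<omega> else 0)
      = K * SV V (\<lambda>\<omega>. if B \<omega> then Pr V t \<omega> else 0)"
    using path[OF assms(1) assms(3) assms(2) hs ft] unfolding t_def E_def by auto
  have wft: "wf t" using follow_wf[OF assms(3) ft] .
  have vt: "vars t \<subseteq> V" using follow_vars[OF ft] assms(2) by blast
  have ht: "hsat t" using follow_hsat[OF hs ft] .
  have xV: "x \<in> V" using vt unfolding t_def by simp
  have g: "SV V (\<lambda>\<omega>. if (x \<in> \<omega>) = c then Pr V t \<omega> else 0) = (if c then p1 else p0)" for c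
  proof -
    define cc where "cc = (if c then c1 else c0)"
    define q where "q = (if c then p1 else p0)"
    have wcc: "wf cc" "vars cc \<subseteq> V - {x}" "hsat cc" "q \<ge> 0" "q = 0 \<longleftrightarrow> cc = Bot"
      using wft vt hsat_Dec[OF ht[unfolded t_def]] unfolding t_def cc_def q_def by auto
    have l: "loc (V - {x}) (\<lambda>\<omega>. 2 * q * Pr V cc \<omega>)" unfolding loc_def
    proof (intro allI impI)
      fix a a' :: "'x set" assume "a \<inter> (V - {x}) = a' \<inter> (V - {x})"
      then have "Pr V cc a = Pr V cc a'" using loc_mono[OF Pr_loc wcc(2)] unfolding loc_def by blast
      then show "2 * q * Pr V cc a = 2 * q * Pr V cc a'" by simp
    qed
    have "SV V (\<lambda>\<omega>. if (x \<in> \<omega>) = c then Pr V t \<omega> else 0)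
        = SV V (\<lambda>\<omega>. if (x \<in> \<omega>) = c then 2 * q * Pr V cc \<omega> else 0)"
      unfolding SV_def
    proof (rule sum.cong[OF refl])
      fix \<omega> :: "'x set"
      show "(if (x \<in> \<omega>) = c then Pr V t \<omega> else 0) = (if (x \<in> \<omega>) = c then 2 * q * Pr V cc \<omega> else 0)"
        unfolding t_def cc_def q_def by (cases c; cases "x \<in> \<omega>") simp_all
    qed
    also have "\<dots> = SV V (\<lambda>\<omega>. 2 * q * Pr V cc \<omega>) / 2" by (rule flip[OF assms(1) xV l])
    also have "\<dots> = q * SV V (Pr V cc)" by (simp add: SV_def sum_distrib_left[symmetric])
    also have "\<dots> = q"
    proof (cases "cc = Bot")
      case True
      then show ?thesis using wcc by simp
    next
      case False
      then show ?thesis using mass[OF assms(1) wcc(1) _ wcc(3)] wcc(2) by auto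
    qed
    finally show ?thesis unfolding q_def .
  qed
  have lx: "loc (vars t) (\<lambda>\<omega>. (x \<in> \<omega>) = b)" unfolding loc_def t_def by auto
  have lT: "loc (vars t) (\<lambda>\<omega>. True)" unfolding loc_def by auto
  have num: "prob V u ({\<omega>. (x \<in> \<omega>) = b} \<inter> {\<omega>. E \<omega>}) = K * (if b then p1 else p0)"
  proof -
    have "{\<omega>. (x \<in> \<omega>) = b} \<inter> {\<omega>. E \<omega>} = {\<omega>. E \<omega> \<and> (x \<in> \<omega>) = b}" by blast
    then show ?thesis using prob_SV[OF assms(1)] K(2)[rule_format, OF lx] g[of b] by simp
  qed
  have den: "prob V u {\<omega>. E \<omega>} = K"
  proof -
    have "prob V u {\<omega>. E \<omega>} = SV V (\<lambda>\<omega>. if E \<omega> \<and> True then Pr V u \<omega> else 0)"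
      using prob_SV[OF assms(1)] by simp
    also have "\<dots> = K * SV V (\<lambda>\<omega>. if True then Pr V t \<omega> else 0)"
      using K(2)[rule_format, OF lT] .
    also have "SV V (\<lambda>\<omega>. if True then Pr V t \<omega> else 0)
        = SV V (\<lambda>\<omega>. if (x \<in> \<omega>) = True then Pr V t \<omega> else 0)
        + SV V (\<lambda>\<omega>. if (x \<in> \<omega>) = False then Pr V t \<omega> else 0)"
      unfolding SV_def sum.distrib[symmetric] by (rule sum.cong) auto
    also have "\<dots> = p1 + p0" unfolding g by simp
    also have "p1 + p0 = 1" using wft unfolding t_def by simp
    finally show ?thesis by simp
  qed
  show ?thesis unfolding cond_prob_def E_def[symmetric] num den using K(1) by simp
qed

end
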